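(* Let $m$ and $n$ be non-negative integers and let $G$ be a soluble group having exactly $m$ subgroups that are not nilpotent of class at most $n$. If $d$ is the derived length of $G$, then $d \leq [\log_2(n)]+m+1$.
   Context: $[x]$ denotes the integer part of $x$. A subgroup is "not nilpotent of class at most $n$" if it is either non-nilpotent or nilpotent of class greater than $n$. *)

theory Defs
  imports "HOL-Algebra.Algebra" Complex_Main
begin

text \<open>Lower central series of a subgroup H of G (computed inside G):
  index 0 is H itself (gamma_1), index i+1 is the subgroup generated by the
  commutators [x,y] with x in term i and y in H.\<close>
fun lower_central :: "('a, 'b) monoid_scheme \<Rightarrow> 'a set \<Rightarrow> nat \<Rightarrow> 'a set" where
  "lower_central G H 0 = H"
| "lower_central G H (Suc i) =
     generate G (\<Union>x \<in> lower_central G H i. \<Union>y \<in> H.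
        { x \<otimes>\<^bsub>G\<^esub> y \<otimes>\<^bsub>G\<^esub> inv\<^bsub>G\<^esub> x \<otimes>\<^bsub>G\<^esub> inv\<^bsub>G\<^esub> y })"

definition nilpotent_class_le :: "('a, 'b) monoid_scheme \<Rightarrow> 'a set \<Rightarrow> nat \<Rightarrow> bool" where
  "nilpotent_class_le G H n \<longleftrightarrow> lower_central G H n = {\<one>\<^bsub>G\<^esub>}"

definition derived_length :: "('a, 'b) monoid_scheme \<Rightarrow> nat" where
  "derived_length G = (LEAST k. (derived G ^^ k) (carrier G) = {\<one>\<^bsub>G\<^esub>})"

end

theory Submission
  imports Defs
begin

definition comm :: "('a, 'b) monoid_scheme \<Rightarrow> 'a \<Rightarrow> 'a \<Rightarrow> 'a" where
  "comm G x y = x \<otimes>\<^bsub>G\<^esub> y \<otimes>\<^bsub>G\<^esub> inv\<^bsub>G\<^esub> x \<otimes>\<^bsub>G\<^esub> inv\<^bsub>G\<^esub> y"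

context group begin

lemma cancel1[simp]: "x \<in> carrier G \<Longrightarrow> y \<in> carrier G \<Longrightarrow> x \<otimes> (inv x \<otimes> y) = y"
  by (simp add: m_assoc[symmetric])
lemma cancel2[simp]: "x \<in> carrier G \<Longrightarrow> y \<in> carrier G \<Longrightarrow> inv x \<otimes> (x \<otimes> y) = y"
  by (simp add: m_assoc[symmetric])

lemma comm_closed[simp]: "x \<in> carrier G \<Longrightarrow> y \<in> carrier G \<Longrightarrow> comm G x y \<in> carrier G"
  by (simp add: comm_def)

lemma hw: assumes [simp]: "x \<in> carrier G" "h \<in> carrier G" "a \<in> carrier G"
  shows "(inv x \<otimes> comm G (comm G x h) a \<otimes> x)
   \<otimes> (a \<otimes> comm G (comm G (inv a) (inv x)) h \<otimes> inv a)
   \<otimes> (h \<otimes> comm G (comm G (inv h) a) (inv x) \<otimes> inv h) = \<one>"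
  by (simp add: comm_def m_assoc inv_mult_group)

lemma comm_inv2: "a \<in> carrier G \<Longrightarrow> b \<in> carrier G \<Longrightarrow>
   comm G a (inv b) = inv b \<otimes> inv (comm G a b) \<otimes> b"
  by (simp add: comm_def m_assoc inv_mult_group)

lemma comm_mult2: "a \<in> carrier G \<Longrightarrow> b \<in> carrier G \<Longrightarrow> c \<in> carrier G \<Longrightarrow>
   comm G a (b \<otimes> c) = comm G a b \<otimes> (b \<otimes> comm G a c \<otimes> inv b)"
  by (simp add: comm_def m_assoc inv_mult_group)

lemma comm_swap: "a \<in> carrier G \<Longrightarrow> b \<in> carrier G \<Longrightarrow> comm G b a = inv (comm G a b)"
  by (simp add: comm_def m_assoc inv_mult_group)

lemma comm_conj: "a \<in> carrier G \<Longrightarrow> b \<in> carrier G \<Longrightarrow> g \<in> carrier G \<Longrightarrow>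
   g \<otimes> comm G a b \<otimes> inv g = comm G (g \<otimes> a \<otimes> inv g) (g \<otimes> b \<otimes> inv g)"
  by (simp add: comm_def m_assoc inv_mult_group)

lemma lc_Suc: "lower_central G H (Suc k) =
   generate G {comm G x y | x y. x \<in> lower_central G H k \<and> y \<in> H}"
  by (simp add: comm_def) (rule arg_cong[where f="generate G"], blast)

lemma lc_sub:
  assumes "subgroup H G" shows "lower_central G H k \<subseteq> H"
proof (induction k)
  case 0 then show ?case by simp
next
  case (Suc k)
  have "{comm G x y | x y. x \<in> lower_central G H k \<and> y \<in> H} \<subseteq> H"
    using Suc assms by (auto simp: comm_def subgroup.m_closed subgroup.m_inv_closed)
  then show ?case unfolding lc_Suc using generate_subgroup_incl assms by blast
qed

lemma lc_subgroup:
  assumes "subgroup H G" shows "subgroup (lower_central G H k) G"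
proof (cases k)
  case 0 then show ?thesis using assms by simp
next
  case (Suc k')
  have "{comm G x y | x y. x \<in> lower_central G H k' \<and> y \<in> H} \<subseteq> carrier G"
  proof
    fix z assume "z \<in> {comm G x y | x y. x \<in> lower_central G H k' \<and> y \<in> H}"
    then obtain x y where z: "z = comm G x y" "x \<in> lower_central G H k'" "y \<in> H" by blast
    have "x \<in> carrier G" "y \<in> carrier G"
      using z lc_sub[OF assms, of k'] subgroup.subset[OF assms] by auto
    then show "z \<in> carrier G" using z(1) by simp
  qed
  then show ?thesis unfolding Suc lc_Suc by (rule generate_is_subgroup)
qed

lemma lc_carrier: "subgroup H G \<Longrightarrow> x \<in> lower_central G H k \<Longrightarrow> x \<in> carrier G"
  by (rule subgroup.mem_carrier[OF lc_subgroup])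

lemma lc_gen: "x \<in> lower_central G H k \<Longrightarrow> y \<in> H \<Longrightarrow> comm G x y \<in> lower_central G H (Suc k)"
  unfolding lc_Suc by (rule generate.incl) blast

lemma lc_normal:
  assumes H: "subgroup H G" and g: "g \<in> H"
  shows "x \<in> lower_central G H k \<Longrightarrow> g \<otimes> x \<otimes> inv g \<in> lower_central G H k"
proof (induction k arbitrary: x)
  case 0 then show ?case using H g by (simp add: subgroup.m_closed subgroup.m_inv_closed)
next
  case (Suc k)
  have Hc: "H \<subseteq> carrier G" by (rule subgroup.subset[OF H])
  have gc: "g \<in> carrier G" using g Hc by (rule subsetD[rotated])
  let ?S = "{comm G x y | x y. x \<in> lower_central G H k \<and> y \<in> H}"
  have Sc: "?S \<subseteq> carrier G"
  proof
    fix z assume "z \<in> ?S"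
    then obtain x y where z: "z = comm G x y" "x \<in> lower_central G H k" "y \<in> H" by blast
    have "x \<in> carrier G" by (rule lc_carrier[OF H z(2)])
    moreover have "y \<in> carrier G" using z(3) Hc by (rule subsetD[rotated])
    ultimately show "z \<in> carrier G" using z(1) by simp
  qed
  have sg: "subgroup (lower_central G H (Suc k)) G" by (rule lc_subgroup[OF H])
  from Suc.prems have "x \<in> generate G ?S" by (simp only: lc_Suc)
  then show ?case
  proof (induction x rule: generate.induct)
    case one
    have "g \<otimes> \<one> \<otimes> inv g = \<one>" using gc by simp
    then show ?case using subgroup.one_closed[OF sg] by simp
  next
    case (incl h)
    then obtain a y where h: "h = comm G a y" "a \<in> lower_central G H k" "y \<in> H" by blast
    have ac: "a \<in> carrier G" using h lc_carrier[OF H] by blast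
    have yc: "y \<in> carrier G" using h(3) Hc by (rule subsetD[rotated])
    have E: "g \<otimes> h \<otimes> inv g = comm G (g \<otimes> a \<otimes> inv g) (g \<otimes> y \<otimes> inv g)"
      using h ac yc gc comm_conj by simp
    have A: "g \<otimes> a \<otimes> inv g \<in> lower_central G H k" using Suc.IH h by blast
    have B: "g \<otimes> y \<otimes> inv g \<in> H" using H g h by (simp add: subgroup.m_closed subgroup.m_inv_closed)
    have "comm G (g \<otimes> a \<otimes> inv g) (g \<otimes> y \<otimes> inv g) \<in> lower_central G H (Suc k)" by (rule lc_gen[OF A B])
    then show ?case by (simp only: E)
  next
    case (inv h)
    then obtain a y where h: "h = comm G a y" "a \<in> lower_central G H k" "y \<in> H" by blast
    have ac: "a \<in> carrier G" using h lc_carrier[OF H] by blast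
    have yc: "y \<in> carrier G" using h(3) Hc by (rule subsetD[rotated])
    have hc: "h \<in> carrier G" using h ac yc by simp
    have "g \<otimes> inv h \<otimes> inv g = inv (g \<otimes> h \<otimes> inv g)"
      using hc gc by (simp add: m_assoc inv_mult_group)
    have E: "g \<otimes> h \<otimes> inv g = comm G (g \<otimes> a \<otimes> inv g) (g \<otimes> y \<otimes> inv g)"
      using h ac yc gc comm_conj by simp
    have A: "g \<otimes> a \<otimes> inv g \<in> lower_central G H k" using Suc.IH h by blast
    have B: "g \<otimes> y \<otimes> inv g \<in> H" using H g h by (simp add: subgroup.m_closed subgroup.m_inv_closed)
    have "comm G (g \<otimes> a \<otimes> inv g) (g \<otimes> y \<otimes> inv g) \<in> lower_central G H (Suc k)" by (rule lc_gen[OF A B])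
    then have "g \<otimes> h \<otimes> inv g \<in> lower_central G H (Suc k)" by (simp only: E)
    then have "inv (g \<otimes> h \<otimes> inv g) \<in> lower_central G H (Suc k)" by (rule subgroup.m_inv_closed[OF sg])
    then show ?case using \<open>g \<otimes> inv h \<otimes> inv g = inv (g \<otimes> h \<otimes> inv g)\<close> by (simp only:)
  next
    case (eng h1 h2)
    have c1: "h1 \<in> carrier G" "h2 \<in> carrier G" using eng.hyps generate_in_carrier[OF Sc] by auto
    have "g \<otimes> (h1 \<otimes> h2) \<otimes> inv g = (g \<otimes> h1 \<otimes> inv g) \<otimes> (g \<otimes> h2 \<otimes> inv g)"
      using c1 gc by (simp add: m_assoc)
    then show ?case using subgroup.m_closed[OF sg eng.IH] by simp
  qed
qed

lemma lc_decr:
  assumes H: "subgroup H G" shows "lower_central G H (Suc k) \<subseteq> lower_central G H k"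
proof (induction k)
  case 0 then show ?case using lc_sub[OF H, of 1] by simp
next
  case (Suc k)
  have "{comm G x y | x y. x \<in> lower_central G H (Suc k) \<and> y \<in> H}
     \<subseteq> {comm G x y | x y. x \<in> lower_central G H k \<and> y \<in> H}" using Suc by blast
  then show ?case unfolding lc_Suc[where k="Suc k"] lc_Suc[where k=k] by (rule mono_generate)
qed

lemma lc_mono:
  assumes H: "subgroup H G" shows "i \<le> j \<Longrightarrow> lower_central G H j \<subseteq> lower_central G H i"
proof (induction j rule: dec_induct)
  case base then show ?case by simp
next
  case (step j) then show ?case using lc_decr[OF H, of j] by blast
qed

lemma comm_gen_closed:
  assumes H: "subgroup H G" and N: "subgroup N G"
    and Nn: "\<And>g n. g \<in> H \<Longrightarrow> n \<in> N \<Longrightarrow> g \<otimes> n \<otimes> inv g \<in> N"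
    and A: "A \<subseteq> H" and S: "S \<subseteq> H"
    and base: "\<And>a s. a \<in> A \<Longrightarrow> s \<in> S \<Longrightarrow> comm G a s \<in> N"
  shows "b \<in> generate G S \<Longrightarrow> a \<in> A \<Longrightarrow> comm G a b \<in> N"
proof (induction b arbitrary: a rule: generate.induct)
  case (one a)
  have Hc: "H \<subseteq> carrier G" by (rule subgroup.subset[OF H])
  have "a \<in> carrier G" using one A Hc by blast
  then have "comm G a \<one> = \<one>" by (simp add: comm_def)
  then show ?case using subgroup.one_closed[OF N] by simp
next
  case (incl h a) then show ?case using base by blast
next
  case (inv h a)
  have Hc: "H \<subseteq> carrier G" by (rule subgroup.subset[OF H])
  have hH: "h \<in> H" using inv S by blast
  have ac: "a \<in> carrier G" using inv A Hc by blast
  have hc: "h \<in> carrier G" using hH Hc by blast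
  have "comm G a (inv h) = inv h \<otimes> inv (comm G a h) \<otimes> inv (inv h)"
    using comm_inv2 ac hc by simp
  moreover have "inv (comm G a h) \<in> N" using subgroup.m_inv_closed[OF N base[OF inv(2) inv(1)]] .
  moreover have "inv h \<in> H" by (rule subgroup.m_inv_closed[OF H hH])
  ultimately show ?case using Nn[of "inv h" "inv (comm G a h)"] by simp
next
  case (eng h1 h2 a)
  have Hc: "H \<subseteq> carrier G" by (rule subgroup.subset[OF H])
  have gH: "generate G S \<subseteq> H" using generate_subgroup_incl[OF S H] .
  have h1: "h1 \<in> H" "h2 \<in> H" using eng.hyps gH by auto
  have ac: "a \<in> carrier G" using eng A Hc by blast
  have "comm G a (h1 \<otimes> h2) = comm G a h1 \<otimes> (h1 \<otimes> comm G a h2 \<otimes> inv h1)"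
    using comm_mult2 ac h1 Hc by blast
  moreover have "comm G a h1 \<in> N" "comm G a h2 \<in> N" using eng by auto
  moreover have "h1 \<otimes> comm G a h2 \<otimes> inv h1 \<in> N" by (rule Nn[OF h1(1) \<open>comm G a h2 \<in> N\<close>])
  ultimately show ?case using subgroup.m_closed[OF N] by simp
qed

lemma lc_comm:
  assumes H: "subgroup H G"
  shows "\<forall>i a b. a \<in> lower_central G H i \<longrightarrow> b \<in> lower_central G H j \<longrightarrow>
           comm G a b \<in> lower_central G H (i + j + 1)"
proof (induction j)
  case 0
  then show ?case using lc_gen by simp
next
  case (Suc j)
  show ?case
  proof (intro allI impI)
    fix i a b assume a: "a \<in> lower_central G H i" and b: "b \<in> lower_central G H (Suc j)"
    let ?N = "lower_central G H (i + Suc j + 1)"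
    let ?L = "lower_central G H"
    have Hc: "H \<subseteq> carrier G" by (rule subgroup.subset[OF H])
    have carr: "\<And>k y. y \<in> ?L k \<Longrightarrow> y \<in> carrier G" using lc_carrier[OF H] by blast
    have linv: "\<And>k y. y \<in> ?L k \<Longrightarrow> inv y \<in> ?L k"
      by (rule subgroup.m_inv_closed[OF lc_subgroup[OF H]])
    have lmul: "\<And>k y z. y \<in> ?L k \<Longrightarrow> z \<in> ?L k \<Longrightarrow> y \<otimes> z \<in> ?L k"
      by (rule subgroup.m_closed[OF lc_subgroup[OF H]])
    have IH: "\<And>i a b. a \<in> ?L i \<Longrightarrow> b \<in> ?L j \<Longrightarrow> comm G a b \<in> ?L (i + j + 1)"
      using Suc.IH by blast
    have base: "comm G a s \<in> ?N" if as: "a \<in> ?L i" "s \<in> {comm G x y | x y. x \<in> ?L j \<and> y \<in> H}" for a s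
    proof -
      obtain x h where s: "s = comm G x h" "x \<in> ?L j" "h \<in> H" using as(2) by blast
      have xc: "x \<in> carrier G" using s(2) carr by blast
      have hc: "h \<in> carrier G" using s(3) Hc by blast
      have ac: "a \<in> carrier G" using as(1) carr by blast
      have aH: "a \<in> H" using as(1) lc_sub[OF H] by blast
      have xH: "x \<in> H" using s(2) lc_sub[OF H] by blast
      have hiH: "inv h \<in> H" by (rule subgroup.m_inv_closed[OF H s(3)])
      define t2 where "t2 = a \<otimes> comm G (comm G (inv a) (inv x)) h \<otimes> inv a"
      define t3 where "t3 = h \<otimes> comm G (comm G (inv h) a) (inv x) \<otimes> inv h"
      have "comm G (inv a) (inv x) \<in> ?L (i + j + 1)"
        by (rule IH[OF linv[OF as(1)] linv[OF s(2)]])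
      then have "comm G (comm G (inv a) (inv x)) h \<in> ?L (Suc (i + j + 1))"
        by (rule lc_gen[OF _ s(3)])
      then have "comm G (comm G (inv a) (inv x)) h \<in> ?N" by simp
      then have t2: "t2 \<in> ?N" unfolding t2_def
        by (rule lc_normal[OF H aH])
      have "comm G a (inv h) \<in> ?L (Suc i)"
        by (rule lc_gen[OF as(1) hiH])
      then have "inv (comm G a (inv h)) \<in> ?L (Suc i)" by (rule linv)
      then have "comm G (inv h) a \<in> ?L (Suc i)"
        using comm_swap[of a "inv h"] ac hc by simp
      then have "comm G (comm G (inv h) a) (inv x) \<in> ?L (Suc i + j + 1)"
        by (rule IH[OF _ linv[OF s(2)]])
      then have "comm G (comm G (inv h) a) (inv x) \<in> ?N" by simp
      then have t3: "t3 \<in> ?N" unfolding t3_def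
        by (rule lc_normal[OF H s(3)])
      have t23c: "t2 \<in> carrier G" "t3 \<in> carrier G" using carr[OF t2] carr[OF t3] by blast+
      have hwid: "(inv x \<otimes> comm G (comm G x h) a \<otimes> x) \<otimes> t2 \<otimes> t3 = \<one>"
        unfolding t2_def t3_def by (rule hw[OF xc hc ac])
      have T1c: "inv x \<otimes> comm G (comm G x h) a \<otimes> x \<in> carrier G" using xc hc ac by simp
      have "(inv x \<otimes> comm G (comm G x h) a \<otimes> x) \<otimes> (t2 \<otimes> t3) = \<one>"
        using hwid T1c t23c by (simp only: m_assoc)
      then have t1: "inv (t2 \<otimes> t3) = inv x \<otimes> comm G (comm G x h) a \<otimes> x"
        by (rule inv_equality[OF _ m_closed[OF t23c] T1c])
      have "inv (t2 \<otimes> t3) \<in> ?N"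
        by (rule linv[OF lmul[OF t2 t3]])
      then have "inv x \<otimes> comm G (comm G x h) a \<otimes> x \<in> ?N" by (simp only: t1)
      then have "x \<otimes> (inv x \<otimes> comm G (comm G x h) a \<otimes> x) \<otimes> inv x \<in> ?N"
        by (rule lc_normal[OF H xH])
      moreover have "x \<otimes> (inv x \<otimes> comm G (comm G x h) a \<otimes> x) \<otimes> inv x = comm G (comm G x h) a"
        using xc hc ac by (simp add: m_assoc)
      ultimately have "comm G (comm G x h) a \<in> ?N" by simp
      then have "inv (comm G (comm G x h) a) \<in> ?N" by (rule linv)
      then show ?thesis using comm_swap[of "comm G x h" a] xc hc ac s(1) by simp
    qed
    show "comm G a b \<in> ?N"
    proof (rule comm_gen_closed[OF H lc_subgroup[OF H], where A="?L i"])
      show "\<And>g n. g \<in> H \<Longrightarrow> n \<in> ?N \<Longrightarrow> g \<otimes> n \<otimes> inv g \<in> ?N" by (rule lc_normal[OF H])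
      show "?L i \<subseteq> H" by (rule lc_sub[OF H])
      show "{comm G x y | x y. x \<in> ?L j \<and> y \<in> H} \<subseteq> H"
        using lc_sub[OF H, of j] H by (auto simp: comm_def subgroup.m_closed subgroup.m_inv_closed)
      show "b \<in> generate G {comm G x y | x y. x \<in> ?L j \<and> y \<in> H}" using b by (simp only: lc_Suc)
      show "a \<in> ?L i" by (rule a)
    qed (rule base)
  qed
qed

lemma derived_lc:
  assumes H: "subgroup H G"
  shows "(derived G ^^ k) H \<subseteq> lower_central G H (2 ^ k - 1)"
proof (induction k)
  case 0 then show ?case by simp
next
  case (Suc k)
  let ?D = "(derived G ^^ k) H"
  have "derived_set G ?D \<subseteq> lower_central G H (2 ^ Suc k - 1)"
  proof
    fix z assume "z \<in> derived_set G ?D"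
    then obtain a b where ab: "a \<in> ?D" "b \<in> ?D" "z = a \<otimes> b \<otimes> inv a \<otimes> inv b" by blast
    have a1: "a \<in> lower_central G H (2 ^ k - 1)" using ab(1) Suc.IH by blast
    have b1: "b \<in> lower_central G H (2 ^ k - 1)" using ab(2) Suc.IH by blast
    have C0: "comm G a b \<in> lower_central G H ((2 ^ k - 1) + (2 ^ k - 1) + 1)"
      using lc_comm[OF H, of "2 ^ k - 1"] a1 b1 by blast
    have num: "(2::nat) ^ k - 1 + (2 ^ k - 1) + 1 = 2 ^ Suc k - 1"
    proof -
      have p: "(1::nat) \<le> 2 ^ k" by simp
      show ?thesis using p by (simp only: power_Suc)
    qed
    from C0 have C: "comm G a b \<in> lower_central G H (2 ^ Suc k - 1)" unfolding num .
    show "z \<in> lower_central G H (2 ^ Suc k - 1)" using C unfolding comm_def ab(3) .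
  qed
  then have "generate G (derived_set G ?D) \<subseteq> lower_central G H (2 ^ Suc k - 1)"
    by (rule generate_subgroup_incl[OF _ lc_subgroup[OF H]])
  moreover have "(derived G ^^ Suc k) H = generate G (derived_set G ?D)"
    by (simp add: derived_def[of G ?D])
  ultimately show ?case by simp
qed

lemma nilp_derived_trivial:
  assumes H: "subgroup H G" and nil: "nilpotent_class_le G H n" and e: "n < 2 ^ e"
  shows "(derived G ^^ e) H = {\<one>}"
proof -
  have "(derived G ^^ e) H \<subseteq> lower_central G H n"
  proof -
    have "n \<le> 2 ^ e - 1" using e by linarith
    then show ?thesis using derived_lc[OF H, of e] lc_mono[OF H, of n "2 ^ e - 1"] by blast
  qed
  then have "(derived G ^^ e) H \<subseteq> {\<one>}" using nil by (simp add: nilpotent_class_le_def)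
  moreover have "\<one> \<in> (derived G ^^ e) H"
    by (rule subgroup.one_closed[OF exp_of_derived_is_subgroup[OF H]])
  ultimately show ?thesis by blast
qed

end


lemma n_lt_pow:
  fixes n :: nat
  shows "n < 2 ^ (nat \<lfloor>log 2 (real n)\<rfloor> + 1)" and "0 \<le> \<lfloor>log 2 (real n)\<rfloor>"
proof -
  have "n < 2 ^ (nat \<lfloor>log 2 (real n)\<rfloor> + 1) \<and> 0 \<le> \<lfloor>log 2 (real n)\<rfloor>"
  proof (cases "n = 0")
    case True then show ?thesis by (simp add: log_def)
  next
    case False
    then have n1: "real n \<ge> 1" by simp
    have l0: "log 2 (real n) \<ge> 0" using n1 by simp
    then have f0: "0 \<le> \<lfloor>log 2 (real n)\<rfloor>" by simp
    define t where "t = nat \<lfloor>log 2 (real n)\<rfloor>"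
    have A: "log 2 (real n) < real (t + 1)" using f0 unfolding t_def by linarith
    have B: "real n < 2 powr real (t+1)"
      by (rule iffD1[OF log_less_iff A]) (use n1 in auto)
    have eq: "(2::real) powr real (t+1) = 2 ^ (t+1)" by (rule powr_realpow) simp
    have "real n < 2 ^ (t+1)" using B unfolding eq .
    then have "n < 2 ^ (t + 1)"
      by (metis of_nat_less_iff of_nat_numeral of_nat_power)
    then have "n < 2 ^ (nat \<lfloor>log 2 (real n)\<rfloor> + 1)" unfolding t_def .
    then show ?thesis using f0 by simp
  qed
  then show "n < 2 ^ (nat \<lfloor>log 2 (real n)\<rfloor> + 1)" and "0 \<le> \<lfloor>log 2 (real n)\<rfloor>" by auto
qed

theorem theoremB:
  fixes G :: "('a, 'b) monoid_scheme" and m n :: nat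
  assumes "group G"
    and "solvable G"
    and "finite {H. subgroup H G \<and> \<not> nilpotent_class_le G H n}"
    and "card {H. subgroup H G \<and> \<not> nilpotent_class_le G H n} = m"
  shows "int (derived_length G) \<le> \<lfloor>log 2 (real n)\<rfloor> + int m + 1"
proof -
  interpret group G by (rule assms(1))
  define D where "D k = (derived G ^^ k) (carrier G)" for k
  define d where "d = derived_length G"
  define e where "e = nat \<lfloor>log 2 (real n)\<rfloor> + 1"
  define Bad where "Bad = {H. subgroup H G \<and> \<not> nilpotent_class_le G H n}"
  have ex: "\<exists>k. D k = {\<one>\<^bsub>G\<^esub>}" using assms(2) solvable_iff_trivial_derived_seq D_def by simp
  have Dd: "D d = {\<one>\<^bsub>G\<^esub>}" unfolding d_def derived_length_def D_def
    using LeastI_ex[OF ex[unfolded D_def]] .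
  have Dlt: "k < d \<Longrightarrow> D k \<noteq> {\<one>\<^bsub>G\<^esub>}" for k
    unfolding d_def derived_length_def D_def using not_less_Least by blast
  have Dsub: "subgroup (D k) G" for k unfolding D_def by (rule exp_of_derived_is_subgroup[OF subgroup_self])
  have Dsuc: "D (Suc k) = derived G (D k)" for k unfolding D_def by simp
  have Ddec: "i \<le> j \<Longrightarrow> D j \<subseteq> D i" for i j
  proof (induction j rule: dec_induct)
    case base then show ?case by simp
  next
    case (step j)
    have "D (Suc j) \<subseteq> D j" unfolding Dsuc by (rule derived_incl[OF subset_refl Dsub])
    then show ?case using step by blast
  qed
  have Dadd: "(derived G ^^ e) (D i) = D (e + i)" for i unfolding D_def by (simp add: funpow_add)
  have inj: "inj_on D {..<d}"
  proof (rule inj_onI, rule ccontr)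
    fix i j assume i: "i \<in> {..<d}" and j: "j \<in> {..<d}" and eq: "D i = D j" and ne: "i \<noteq> j"
    have "\<exists>i'. i' < d \<and> D i' = D (Suc i')"
    proof (cases "i < j")
      case True
      then have "D j \<subseteq> D (Suc i)" "D (Suc i) \<subseteq> D i" using Ddec by auto
      then show ?thesis using eq i True by (intro exI[of _ i]) auto
    next
      case False
      then have "j < i" using ne by simp
      then have "D i \<subseteq> D (Suc j)" "D (Suc j) \<subseteq> D j" using Ddec by auto
      then show ?thesis using eq j \<open>j < i\<close> by (intro exI[of _ j]) auto
    qed
    then obtain i' where i': "i' < d" "D i' = D (Suc i')" by blast
    have "D (i' + k) = D i'" for k
    proof (induction k)
      case 0 then show ?case by simp
      next
      case (Suc k)
      have "D (i' + Suc k) = derived G (D (i' + k))" using Dsuc[of "i' + k"] by simp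
      also have "\<dots> = derived G (D i')" using Suc.IH by (simp only:)
      also have "\<dots> = D (Suc i')" by (rule sym[OF Dsuc[of i']])
      also have "\<dots> = D i'" by (rule sym[OF i'(2)])
      finally show ?case .
    qed
    from this[of "d - i'"] i' Dd Dlt show False by simp
  qed
  have en: "n < 2 ^ e" and f0: "0 \<le> \<lfloor>log 2 (real n)\<rfloor>" using n_lt_pow e_def by auto
  have "d \<le> m + e"
  proof (cases "d \<le> e")
    case True then show ?thesis by simp
  next
    case False
    have img: "D ` {..<d - e} \<subseteq> Bad"
    proof
      fix Y0 assume "Y0 \<in> D ` {..<d - e}"
      then obtain i where i: "i < d - e" "Y0 = D i" by blast
      have "\<not> nilpotent_class_le G (D i) n"
      proof
        assume "nilpotent_class_le G (D i) n"
        then have "(derived G ^^ e) (D i) = {\<one>\<^bsub>G\<^esub>}" using nilp_derived_trivial[OF Dsub _ en] by blast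
        then have "D (e + i) = {\<one>\<^bsub>G\<^esub>}" using Dadd by simp
        moreover have "e + i < d" using i by simp
        ultimately show False using Dlt by blast
      qed
      then show "Y0 \<in> Bad" using i Dsub Bad_def by blast
    qed
    have "card (D ` {..<d - e}) = d - e"
      using card_image[OF inj_on_subset[OF inj]] by auto
    moreover have "card (D ` {..<d - e}) \<le> card Bad"
      using card_mono[OF _ img] assms(3) Bad_def by blast
    ultimately show ?thesis using assms(4) Bad_def by simp
  qed
  then show ?thesis using f0 unfolding d_def e_def by linarith
qed

end
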